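(* Let $m\ge 1$ and let $(\phi_n)_{n\ge 0}$ be vectors in $\mathbb{R}^m$ such that the rank-one symmetric matrices $A_n=\phi_n\phi_n^\top$ satisfy $0\le A_n\le I$. Define the transition matrices $\Phi(i,i)=I$ and $\Phi(n+1,i)=(I-A_n)\Phi(n,i)$ for $n\ge i$. Let $(\mu_j)_{j\ge0}$ be nonnegative real numbers (weights), and for integers $0\le k<N$ set $$S_{Nk}=\sum_{j=k}^{N-1}\mu_jA_j,\qquad B_{jk}=\sum_{l=k}^{j-1}(\phi_j^\top\phi_l)^2 .$$ Then, provided the denominator below is nonzero, $$\|\Phi(N,k)\|^2\le 1-\frac{\lambda_{\min}(S_{Nk})}{\left(\sqrt{\max_{k\le j<N}\mu_j}+\sqrt{\sum_{j=k}^{N-1}\mu_jB_{jk}}\right)^2}.$$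
   Context: $\|\cdot\|$ denotes the spectral norm of a matrix, $\lambda_{\min}$ the smallest eigenvalue of a symmetric matrix, and $0\le A\le I$ is in the positive semidefinite (Loewner) order. *)

theory Defs
  imports "HOL-Analysis.Analysis"
begin

definition outer :: "real^'m \<Rightarrow> real^'m^'m" where
  "outer v = (\<chi> i j. v $ i * v $ j)"

definition loewner_le :: "real^'m^'m \<Rightarrow> real^'m^'m \<Rightarrow> bool" where
  "loewner_le A B \<longleftrightarrow> (\<forall>x. 0 \<le> x \<bullet> ((B - A) *v x))"

definition spec_norm :: "real^'m^'m \<Rightarrow> real" where
  "spec_norm A = onorm (\<lambda>x. A *v x)"

definition lambda_min :: "real^'m^'m \<Rightarrow> real" where
  "lambda_min S = Min {l. \<exists>v. v \<noteq> 0 \<and> S *v v = l *\<^sub>R v}"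

text \<open>Transition matrices: PhiD A i d = Phi(i+d, i).\<close>
primrec PhiD :: "(nat \<Rightarrow> real^'m^'m) \<Rightarrow> nat \<Rightarrow> nat \<Rightarrow> real^'m^'m" where
  "PhiD A i 0 = mat 1"
| "PhiD A i (Suc d) = (mat 1 - A (i + d)) ** PhiD A i d"

definition Phi :: "(nat \<Rightarrow> real^'m^'m) \<Rightarrow> nat \<Rightarrow> nat \<Rightarrow> real^'m^'m" where
  "Phi A n i = PhiD A i (n - i)"

end

theory Submission
  imports Defs
begin

lemma mvs: "(A::real^'m^'n) *v (c *\<^sub>R x) = c *\<^sub>R (A *v x)"
  by (simp add: vec_eq_iff matrix_vector_mult_def sum_distrib_left mult_ac)

lemma quad_nonneg_lin:
  fixes c g :: real
  assumes "\<And>t. 0 \<le> 2*t*c + t\<^sup>2 * g"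
  shows "c = 0"
proof (rule ccontr)
  assume c: "c \<noteq> 0"
  have g: "g \<ge> 0" using assms[of 1] assms[of "-1"] by (simp add: power2_eq_square)
  define t where "t = - c / (g + 1)"
  have ct: "c = - t * (g + 1)" using g by (simp add: t_def)
  have t0: "t \<noteq> 0" using c ct by auto
  have "0 \<le> 2*t*c + t\<^sup>2 * g" by (rule assms)
  also have "\<dots> = - (t\<^sup>2) * (g + 2)" unfolding ct by (simp add: algebra_simps power2_eq_square)
  also have "\<dots> < 0" using g t0 by (simp add: mult_pos_pos)
  finally show False by simp
qed

lemma lambda_min_le:
  fixes S :: "real^'m^'m"
  assumes sym: "\<And>u w. (S *v u) \<bullet> w = u \<bullet> (S *v w)"
  shows "lambda_min S * (x \<bullet> x) \<le> x \<bullet> (S *v x)"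
proof -
  let ?f = "\<lambda>v. v \<bullet> (S *v v)"
  let ?K = "sphere (0::real^'m) 1"
  have "continuous_on ?K ?f"
    by (intro continuous_intros)
  moreover have "?K \<noteq> {}"
    using vector_choose_size[of 1, where 'a="real^'m"] by auto
  ultimately obtain v where v: "v \<in> ?K" and vmin: "\<And>y. y \<in> ?K \<Longrightarrow> ?f v \<le> ?f y"
    using continuous_attains_inf[of ?K ?f] by auto
  define m where "m = ?f v"
  have vv: "v \<bullet> v = 1" using v by (simp add: dot_square_norm)
  have ray: "m * (y \<bullet> y) \<le> ?f y" for y
  proof (cases "y = 0")
    case True thus ?thesis by simp
  next
    case False
    let ?z = "(1 / norm y) *\<^sub>R y"
    have "?z \<in> ?K" using False by simp
    hence "m \<le> ?f ?z" unfolding m_def by (rule vmin)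
    also have "?f ?z = ?f y / (norm y)\<^sup>2"
      by (simp add: mvs inner_scaleR_left inner_scaleR_right power2_eq_square)
    finally have "m * (norm y)\<^sup>2 \<le> ?f y" using False by (simp add: field_simps)
    thus ?thesis by (simp add: power2_norm_eq_inner)
  qed
  have eig: "S *v v = m *\<^sub>R v"
  proof -
    have "w \<bullet> (S *v v - m *\<^sub>R v) = 0" for w
    proof -
      let ?g = "?f w - m * (w \<bullet> w)"
      have "0 \<le> 2*t*(w \<bullet> (S *v v - m *\<^sub>R v)) + t\<^sup>2 * ?g" for t
      proof -
        have sv: "v \<bullet> (S *v w) = w \<bullet> (S *v v)" using sym[of w v] by (simp add: inner_commute)
        have "0 \<le> ?f (v + t *\<^sub>R w) - m * ((v + t *\<^sub>R w) \<bullet> (v + t *\<^sub>R w))"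
          using ray[of "v + t *\<^sub>R w"] by simp
        also have "\<dots> = ?f v - m * (v \<bullet> v) + 2 * t * (w \<bullet> (S *v v)) - 2 * t * m * (v \<bullet> w)
            + t\<^sup>2 * ?g"
          by (simp add: matrix_vector_right_distrib mvs inner_add_left inner_add_right
              inner_scaleR_left inner_scaleR_right sv inner_commute[of w v] algebra_simps power2_eq_square)
        also have "\<dots> = 2*t*(w \<bullet> (S *v v - m *\<^sub>R v)) + t\<^sup>2 * ?g"
          using vv by (simp add: m_def inner_diff_right inner_commute[of w v] algebra_simps)
        finally show ?thesis .
      qed
      thus ?thesis by (rule quad_nonneg_lin)
    qed
    from this[of "S *v v - m *\<^sub>R v"] show ?thesis by simp
  qed
  define L where "L = {l. \<exists>v. v \<noteq> 0 \<and> S *v v = l *\<^sub>R v}"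
  have mL: "m \<in> L" unfolding L_def using eig vv by (intro CollectI exI[of _ v]) auto
  have lowL: "m \<le> l" if "l \<in> L" for l
  proof -
    from that obtain u where u: "u \<noteq> 0" "S *v u = l *\<^sub>R u" unfolding L_def by auto
    have "m * (u \<bullet> u) \<le> l * (u \<bullet> u)" using ray[of u] u by simp
    thus ?thesis using u by simp
  qed
  have finL: "finite L"
  proof -
    define U where "U l = (SOME u. u \<noteq> 0 \<and> S *v u = l *\<^sub>R u)" for l
    have U: "U l \<noteq> 0 \<and> S *v U l = l *\<^sub>R U l" if "l \<in> L" for l
      using that unfolding L_def U_def by (rule CollectE) (rule someI_ex)
    have inj: "inj_on U L"
    proof (rule inj_onI)
      fix a b assume ab: "a \<in> L" "b \<in> L" "U a = U b"
      have "a *\<^sub>R U a = S *v U a" using U[OF ab(1)] by simp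
      also have "\<dots> = S *v U b" using ab(3) by simp
      also have "\<dots> = b *\<^sub>R U b" using U[OF ab(2)] by simp
      also have "\<dots> = b *\<^sub>R U a" using ab(3) by simp
      finally have "a *\<^sub>R U a = b *\<^sub>R U a" .
      thus "a = b" using U[OF ab(1)] by (simp add: scaleR_cancel_right)
    qed
    have orth: "pairwise orthogonal (U ` L)"
    proof (clarsimp simp: pairwise_def)
      fix a b assume ab: "a \<in> L" "b \<in> L" "U a \<noteq> U b"
      hence "a \<noteq> b" by auto
      have "a * (U a \<bullet> U b) = (S *v U a) \<bullet> U b" using U[OF ab(1)] by simp
      also have "\<dots> = U a \<bullet> (S *v U b)" by (rule sym)
      also have "\<dots> = b * (U a \<bullet> U b)" using U[OF ab(2)] by simp
      finally show "orthogonal (U a) (U b)" using \<open>a \<noteq> b\<close> by (simp add: orthogonal_def)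
    qed
    have "0 \<notin> U ` L" using U by auto
    hence "independent (U ` L)" using orth by (intro pairwise_orthogonal_independent)
    hence "finite (U ` L)" by (rule finiteI_independent)
    thus ?thesis using inj finite_imageD by blast
  qed
  have "lambda_min S = m"
    unfolding lambda_min_def L_def[symmetric]
    using finL mL lowL by (intro Min_eqI) auto
  thus ?thesis using ray[of x] by simp
qed


lemma wminkowski:
  fixes \<nu> a b :: "'i \<Rightarrow> real"
  assumes "\<And>j. j \<in> I \<Longrightarrow> 0 \<le> \<nu> j"
  shows "(\<Sum>j\<in>I. \<nu> j * (a j + b j)\<^sup>2)
     \<le> (sqrt (\<Sum>j\<in>I. \<nu> j * (a j)\<^sup>2) + sqrt (\<Sum>j\<in>I. \<nu> j * (b j)\<^sup>2))\<^sup>2"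
proof -
  let ?P = "\<Sum>j\<in>I. \<nu> j * (a j)\<^sup>2" and ?Q = "\<Sum>j\<in>I. \<nu> j * (b j)\<^sup>2"
  have P0: "?P \<ge> 0" and Q0: "?Q \<ge> 0" using assms by (auto intro!: sum_nonneg)
  have "(\<Sum>j\<in>I. (sqrt (\<nu> j) * a j) * (sqrt (\<nu> j) * b j))\<^sup>2
        \<le> (\<Sum>j\<in>I. (sqrt (\<nu> j) * a j)\<^sup>2) * (\<Sum>j\<in>I. (sqrt (\<nu> j) * b j)\<^sup>2)"
    by (rule Cauchy_Schwarz_ineq_sum)
  also have "(\<Sum>j\<in>I. (sqrt (\<nu> j) * a j)\<^sup>2) = ?P"
    using assms by (intro sum.cong) (auto simp: power_mult_distrib)
  also have "(\<Sum>j\<in>I. (sqrt (\<nu> j) * b j)\<^sup>2) = ?Q"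
    using assms by (intro sum.cong) (auto simp: power_mult_distrib)
  also have "(\<Sum>j\<in>I. (sqrt (\<nu> j) * a j) * (sqrt (\<nu> j) * b j)) = (\<Sum>j\<in>I. \<nu> j * a j * b j)"
    using assms by (intro sum.cong) (auto simp: algebra_simps real_sqrt_mult[symmetric])
  finally have "(\<Sum>j\<in>I. \<nu> j * a j * b j) \<le> sqrt (?P * ?Q)" by (rule real_le_rsqrt)
  hence cs: "(\<Sum>j\<in>I. \<nu> j * a j * b j) \<le> sqrt ?P * sqrt ?Q" by (simp add: real_sqrt_mult)
  have "(\<Sum>j\<in>I. \<nu> j * (a j + b j)\<^sup>2) = ?P + 2 * (\<Sum>j\<in>I. \<nu> j * a j * b j) + ?Q"
    by (simp add: power2_eq_square algebra_simps sum.distrib sum_distrib_left)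
  also have "\<dots> \<le> ?P + 2 * (sqrt ?P * sqrt ?Q) + ?Q" using cs by simp
  also have "\<dots> = (sqrt ?P + sqrt ?Q)\<^sup>2"
    using P0 Q0 by (simp add: power2_eq_square algebra_simps)
  finally show ?thesis .
qed

lemma sqrt_help:
  fixes M E B :: real assumes "M \<ge> 0" "E \<ge> 0" "B \<ge> 0"
  shows "(sqrt (M * E) + sqrt (B * E))\<^sup>2 = (sqrt M + sqrt B)\<^sup>2 * E"
proof -
  have "(sqrt (M * E) + sqrt (B * E))\<^sup>2 = ((sqrt M + sqrt B) * sqrt E)\<^sup>2"
    by (simp add: real_sqrt_mult algebra_simps)
  also have "\<dots> = (sqrt M + sqrt B)\<^sup>2 * E" using assms by (simp add: power_mult_distrib)
  finally show ?thesis .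
qed

lemma core:
  fixes \<nu> a :: "'i \<Rightarrow> real" and c :: "'i \<Rightarrow> 'i \<Rightarrow> real"
  assumes fin: "finite I" and nu: "\<And>j. j \<in> I \<Longrightarrow> 0 \<le> \<nu> j"
    and M: "\<And>j. j \<in> I \<Longrightarrow> \<nu> j \<le> M"
    and P: "\<And>j. j \<in> I \<Longrightarrow> P j \<subseteq> I"
  shows "(\<Sum>j\<in>I. \<nu> j * (a j + (\<Sum>l\<in>P j. c j l * a l))\<^sup>2)
     \<le> (sqrt M + sqrt (\<Sum>j\<in>I. \<nu> j * (\<Sum>l\<in>P j. (c j l)\<^sup>2)))\<^sup>2 * (\<Sum>j\<in>I. (a j)\<^sup>2)"
proof -
  let ?E = "\<Sum>j\<in>I. (a j)\<^sup>2"
  let ?B = "\<Sum>j\<in>I. \<nu> j * (\<Sum>l\<in>P j. (c j l)\<^sup>2)"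
  have E0: "?E \<ge> 0" by (simp add: sum_nonneg)
  have B0: "?B \<ge> 0" using nu by (auto intro!: sum_nonneg mult_nonneg_nonneg)
  have "M \<ge> 0" if "I \<noteq> {}" using that nu M by (meson all_not_in_conv order_trans)
  have h1: "(\<Sum>j\<in>I. \<nu> j * (a j)\<^sup>2) \<le> M * ?E"
    unfolding sum_distrib_left using nu M by (intro sum_mono mult_right_mono) auto
  have h2: "(\<Sum>j\<in>I. \<nu> j * (\<Sum>l\<in>P j. c j l * a l)\<^sup>2) \<le> ?B * ?E"
  proof -
    have "(\<Sum>j\<in>I. \<nu> j * (\<Sum>l\<in>P j. c j l * a l)\<^sup>2)
        \<le> (\<Sum>j\<in>I. \<nu> j * ((\<Sum>l\<in>P j. (c j l)\<^sup>2) * ?E))"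
    proof (intro sum_mono mult_left_mono)
      fix j assume j: "j \<in> I"
      show "0 \<le> \<nu> j" using nu j .
      have "(\<Sum>l\<in>P j. c j l * a l)\<^sup>2 \<le> (\<Sum>l\<in>P j. (c j l)\<^sup>2) * (\<Sum>l\<in>P j. (a l)\<^sup>2)"
        by (rule Cauchy_Schwarz_ineq_sum)
      also have "\<dots> \<le> (\<Sum>l\<in>P j. (c j l)\<^sup>2) * ?E"
        using P[OF j] fin by (intro mult_left_mono sum_mono2) (auto intro: sum_nonneg)
      finally show "(\<Sum>l\<in>P j. c j l * a l)\<^sup>2 \<le> (\<Sum>l\<in>P j. (c j l)\<^sup>2) * ?E" .
    qed
    also have "\<dots> = ?B * ?E" by (subst sum_distrib_right) (simp add: mult.assoc)
    finally show ?thesis .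
  qed
  have "(\<Sum>j\<in>I. \<nu> j * (a j + (\<Sum>l\<in>P j. c j l * a l))\<^sup>2)
     \<le> (sqrt (\<Sum>j\<in>I. \<nu> j * (a j)\<^sup>2) + sqrt (\<Sum>j\<in>I. \<nu> j * (\<Sum>l\<in>P j. c j l * a l)\<^sup>2))\<^sup>2"
    using nu by (rule wminkowski)
  also have "\<dots> \<le> (sqrt (M * ?E) + sqrt (?B * ?E))\<^sup>2"
    using nu h1 h2 by (intro power_mono add_mono real_sqrt_le_mono add_nonneg_nonneg real_sqrt_ge_zero
        sum_nonneg mult_nonneg_nonneg) auto
  also have "\<dots> = (sqrt M + sqrt ?B)\<^sup>2 * ?E"
  proof (cases "I = {}")
    case True thus ?thesis by simp
  next
    case False
    hence "M \<ge> 0" using \<open>I \<noteq> {} \<Longrightarrow> M \<ge> 0\<close> by simp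
    thus ?thesis using E0 B0 by (rule sqrt_help)
  qed
  finally show ?thesis .
qed


lemma outer_mult: "outer v *v x = (v \<bullet> x) *\<^sub>R v"
  by (simp add: vec_eq_iff outer_def matrix_vector_mult_def inner_vec_def sum_distrib_left sum_distrib_right mult_ac)

lemma sum_mat_mult: "finite I \<Longrightarrow> (\<Sum>j\<in>I. (c j::real) *\<^sub>R (M j :: real^'m^'n)) *v x = (\<Sum>j\<in>I. c j *\<^sub>R (M j *v x))"
proof (induction I rule: finite_induct)
  case empty thus ?case by (simp add: vec_eq_iff matrix_vector_mult_def)
next
  case (insert a I) thus ?case
    by (simp add: matrix_vector_mult_add_rdistrib scaleR_matrix_vector_assoc)
qed

lemma phi_norm_le:
  assumes "loewner_le (outer v) (mat 1)"
  shows "v \<bullet> v \<le> 1"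
proof -
  have "0 \<le> v \<bullet> ((mat 1 - outer v) *v v)" using assms unfolding loewner_le_def by blast
  also have "\<dots> = (v \<bullet> v) * (1 - v \<bullet> v)"
    by (simp add: matrix_vector_mult_diff_rdistrib outer_mult inner_diff_right algebra_simps)
  finally have h: "0 \<le> (v \<bullet> v) * (1 - v \<bullet> v)" .
  show ?thesis
  proof (rule ccontr)
    assume "\<not> v \<bullet> v \<le> 1"
    hence "(v \<bullet> v) * (1 - v \<bullet> v) < 0" by (intro mult_pos_neg) auto
    thus False using h by simp
  qed
qed

lemma step_norm:
  fixes y v :: "real^'m"
  assumes "v \<bullet> v \<le> 1"
  shows "(y - (v \<bullet> y) *\<^sub>R v) \<bullet> (y - (v \<bullet> y) *\<^sub>R v) \<le> y \<bullet> y - (v \<bullet> y)\<^sup>2"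
proof -
  have "(y - (v \<bullet> y) *\<^sub>R v) \<bullet> (y - (v \<bullet> y) *\<^sub>R v) = y \<bullet> y - 2 * (v \<bullet> y)\<^sup>2 + (v \<bullet> y)\<^sup>2 * (v \<bullet> v)"
    by (simp add: inner_diff_left inner_diff_right inner_commute[of y v] power2_eq_square algebra_simps)
  also have "\<dots> \<le> y \<bullet> y - 2 * (v \<bullet> y)\<^sup>2 + (v \<bullet> y)\<^sup>2 * 1"
    using assms by (intro add_left_mono mult_left_mono) auto
  finally show ?thesis by simp
qed

theorem mainTheorem1:
  fixes \<phi> :: "nat \<Rightarrow> real^'m" and \<mu> :: "nat \<Rightarrow> real" and N k :: nat
  assumes psd: "\<And>n. loewner_le 0 (outer (\<phi> n)) \<and> loewner_le (outer (\<phi> n)) (mat 1)"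
    and mu_nonneg: "\<And>j. 0 \<le> \<mu> j"
    and kN: "k < N"
    and denom: "(sqrt (Max (\<mu> ` {k..<N}))
                 + sqrt (\<Sum>j=k..<N. \<mu> j * (\<Sum>l=k..<j. (\<phi> j \<bullet> \<phi> l)\<^sup>2)))\<^sup>2 \<noteq> 0"
  shows "(spec_norm (Phi (\<lambda>n. outer (\<phi> n)) N k))\<^sup>2
         \<le> 1 - lambda_min (\<Sum>j=k..<N. \<mu> j *\<^sub>R outer (\<phi> j))
               / (sqrt (Max (\<mu> ` {k..<N}))
                  + sqrt (\<Sum>j=k..<N. \<mu> j * (\<Sum>l=k..<j. (\<phi> j \<bullet> \<phi> l)\<^sup>2)))\<^sup>2"
proof -
  define A where "A = (\<lambda>n. outer (\<phi> n))"
  define S where "S = (\<Sum>j=k..<N. \<mu> j *\<^sub>R outer (\<phi> j))"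
  define D where "D = (sqrt (Max (\<mu> ` {k..<N}))
                  + sqrt (\<Sum>j=k..<N. \<mu> j * (\<Sum>l=k..<j. (\<phi> j \<bullet> \<phi> l)\<^sup>2)))\<^sup>2"
  have D0: "D > 0" using denom unfolding D_def by simp
  have Sx: "S *v x = (\<Sum>j=k..<N. (\<mu> j * (\<phi> j \<bullet> x)) *\<^sub>R \<phi> j)" for x
    unfolding S_def by (simp add: sum_mat_mult outer_mult)
  have xSx: "x \<bullet> (S *v x) = (\<Sum>j=k..<N. \<mu> j * (\<phi> j \<bullet> x)\<^sup>2)" for x
    unfolding Sx by (simp add: inner_sum_right power2_eq_square inner_commute[of x] mult_ac)
  have sym: "(S *v u) \<bullet> w = u \<bullet> (S *v w)" for u w
    unfolding Sx by (simp add: inner_sum_right inner_sum_left inner_commute[of u] mult_ac)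
  have key: "(Phi A N k *v x) \<bullet> (Phi A N k *v x) \<le> (1 - lambda_min S / D) * (x \<bullet> x)" for x
  proof -
    define z where "z j = PhiD A k (j - k) *v x" for j
    have zk: "z k = x" by (simp add: z_def)
    have zS: "z (Suc j) = z j - (\<phi> j \<bullet> z j) *\<^sub>R \<phi> j" if "k \<le> j" for j
    proof -
      have "Suc j - k = Suc (j - k)" using that by simp
      hence "z (Suc j) = (mat 1 - A j) *v z j"
        using that by (simp add: z_def matrix_vector_mul_assoc)
      thus ?thesis by (simp add: matrix_vector_mult_diff_rdistrib A_def outer_mult)
    qed
    have zform: "z j = x - (\<Sum>l=k..<j. (\<phi> l \<bullet> z l) *\<^sub>R \<phi> l)" if "k \<le> j" for j
      using that
    proof (induction j rule: dec_induct)
      case base thus ?case by (simp add: zk)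
    next
      case (step j) thus ?case by (simp add: zS)
    qed
    have znorm: "z j \<bullet> z j \<le> x \<bullet> x - (\<Sum>l=k..<j. (\<phi> l \<bullet> z l)\<^sup>2)" if "k \<le> j" for j
      using that
    proof (induction j rule: dec_induct)
      case base thus ?case by (simp add: zk)
    next
      case (step j)
      have "z (Suc j) \<bullet> z (Suc j) \<le> z j \<bullet> z j - (\<phi> j \<bullet> z j)\<^sup>2"
        unfolding zS[OF step(1)] by (rule step_norm) (use psd phi_norm_le in blast)
      thus ?case using step by simp
    qed
    define a where "a l = \<phi> l \<bullet> z l" for l
    have px: "\<phi> j \<bullet> x = a j + (\<Sum>l=k..<j. (\<phi> j \<bullet> \<phi> l) * a l)" if "k \<le> j" for j
      using zform[OF that] by (simp add: a_def inner_diff_right inner_sum_right mult_ac)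
    have "lambda_min S * (x \<bullet> x) \<le> x \<bullet> (S *v x)" by (rule lambda_min_le) (rule sym)
    also have "\<dots> = (\<Sum>j=k..<N. \<mu> j * (a j + (\<Sum>l=k..<j. (\<phi> j \<bullet> \<phi> l) * a l))\<^sup>2)"
      unfolding xSx by (intro sum.cong) (auto simp: px)
    also have "\<dots> \<le> D * (\<Sum>j=k..<N. (a j)\<^sup>2)"
      unfolding D_def using mu_nonneg
      by (intro core) (auto intro!: Max_ge)
    finally have "lambda_min S * (x \<bullet> x) / D \<le> (\<Sum>j=k..<N. (a j)\<^sup>2)"
      using D0 by (simp add: divide_simps mult_ac)
    moreover have "Phi A N k *v x = z N" by (simp add: Phi_def z_def)
    moreover have "z N \<bullet> z N \<le> x \<bullet> x - (\<Sum>j=k..<N. (a j)\<^sup>2)"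
      using znorm[of N] kN by (simp add: a_def)
    ultimately show ?thesis by (simp add: algebra_simps)
  qed
  let ?c = "1 - lambda_min S / D"
  obtain x0 :: "real^'m" where "x0 \<noteq> 0"
    using vector_choose_size[of 1, where 'a="real^'m"] by force
  have c0: "?c \<ge> 0"
  proof -
    have "0 \<le> ?c * (x0 \<bullet> x0)" using key[of x0] by (meson inner_ge_zero order_trans)
    moreover have "x0 \<bullet> x0 > 0" using \<open>x0 \<noteq> 0\<close> by simp
    ultimately show ?thesis by (simp add: zero_le_mult_iff)
  qed
  have "spec_norm (Phi A N k) \<le> sqrt ?c"
    unfolding spec_norm_def
  proof (rule onorm_le)
    fix x :: "real^'m"
    have "norm (Phi A N k *v x) = sqrt ((Phi A N k *v x) \<bullet> (Phi A N k *v x))"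
      by (simp add: norm_eq_sqrt_inner)
    also have "\<dots> \<le> sqrt (?c * (x \<bullet> x))" using key[of x] by (rule real_sqrt_le_mono)
    also have "\<dots> = sqrt ?c * norm x" by (simp add: real_sqrt_mult norm_eq_sqrt_inner)
    finally show "norm (Phi A N k *v x) \<le> sqrt ?c * norm x" .
  qed
  moreover have "spec_norm (Phi A N k) \<ge> 0"
    unfolding spec_norm_def by (intro onorm_pos_le matrix_vector_mul_bounded_linear)
  ultimately have "(spec_norm (Phi A N k))\<^sup>2 \<le> (sqrt ?c)\<^sup>2" by (intro power_mono)
  also have "\<dots> = ?c" using c0 by simp
  finally show ?thesis unfolding A_def S_def D_def .
qed

end
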